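(* Let $p>3$ be a prime and $t\in\mathbb Z_p$. Then $$P_{\frac{p-1}2}(t)\equiv\sum_{k=0}^{\frac{p-1}2}\binom{2k}k^2\Big(\frac{1-t}{32}\Big)^k\equiv-\Big(\frac{-6}p\Big)\sum_{x=0}^{p-1}\Big(\frac{x^3-3(t^2+3)x+2t(t^2-9)}p\Big)\pmod p.$$
   Context: $\mathbb Z_p$ denotes the set of rational numbers whose denominator (in lowest terms) is prime to $p$; congruences are in this ring. For $a\in\mathbb Z_p$, $\big(\frac ap\big)$ is the Legendre symbol of the residue of $a$ modulo $p$ (equal to $0$ if $p\mid a$). $P_n(x)$ is the $n$-th Legendre polynomial, defined by $\frac1{\sqrt{1-2xt+t^2}}=\sum_{n\ge0}P_n(x)t^n$, equivalently $P_n(x)=\frac1{2^n}\sum_{k=0}^{[n/2]}\frac{(-1)^k(2n-2k)!}{k!(n-k)!(n-2k)!}x^{n-2k}$. *)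

theory Defs
  imports "HOL-Number_Theory.Number_Theory"
begin

text \<open>Z_p: rationals whose denominator (in lowest terms) is prime to p.\<close>
definition in_Zp :: "int \<Rightarrow> rat \<Rightarrow> bool" where
  "in_Zp p q \<longleftrightarrow> coprime (snd (quotient_of q)) p"

definition cong_Zp :: "rat \<Rightarrow> rat \<Rightarrow> int \<Rightarrow> bool" where
  "cong_Zp a b p \<longleftrightarrow> in_Zp p ((a - b) / of_int p)"

definition res_Zp :: "int \<Rightarrow> rat \<Rightarrow> int" where
  "res_Zp p q = (THE r. 0 \<le> r \<and> r < p \<and>
       [snd (quotient_of q) * r = fst (quotient_of q)] (mod p))"

definition Legendre_Zp :: "rat \<Rightarrow> int \<Rightarrow> int" where
  "Legendre_Zp a p = Legendre (res_Zp p a) p"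

definition LegendreP :: "nat \<Rightarrow> rat \<Rightarrow> rat" where
  "LegendreP n x = (1 / 2 ^ n) * (\<Sum>k = 0..n div 2.
     (-1) ^ k * fact (2*n - 2*k) / (fact k * fact (n - k) * fact (n - 2*k)) * x ^ (n - 2*k))"

end

theory Submission
  imports Defs "HOL-Computational_Algebra.Polynomial"
begin


lemma in_Zp_iff:
  assumes "p \<noteq> 0"
  shows "in_Zp p q \<longleftrightarrow> (\<exists>a b. b \<noteq> 0 \<and> coprime b p \<and> q = of_int a / of_int b)"
proof
  assume "in_Zp p q"
  obtain a b where qo: "quotient_of q = (a, b)" by fastforce
  have "b > 0" using quotient_of_denom_pos[OF qo] .
  moreover have "q = of_int a / of_int b" using quotient_of_div[OF qo] .
  moreover have "coprime b p" using \<open>in_Zp p q\<close> qo by (simp add: in_Zp_def)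
  ultimately show "\<exists>a b. b \<noteq> 0 \<and> coprime b p \<and> q = of_int a / of_int b"
    by (intro exI[of _ a] exI[of _ b]) simp
next
  assume "\<exists>a b. b \<noteq> 0 \<and> coprime b p \<and> q = of_int a / of_int b"
  then obtain a b where b: "b \<noteq> 0" "coprime b p" "q = of_int a / of_int b" by auto
  obtain a' b' where qo: "quotient_of q = (a', b')" by fastforce
  have b': "b' > 0" using quotient_of_denom_pos[OF qo] .
  have q': "q = of_int a' / of_int b'" using quotient_of_div[OF qo] .
  have cp: "coprime a' b'" using quotient_of_coprime[OF qo] .
  have "of_int a / of_int b = (of_int a' / of_int b' :: rat)" using b q' by simp
  hence "of_int (a * b') = (of_int (a' * b) :: rat)" using b b' by (simp add: field_simps)
  hence e: "a * b' = a' * b" by (simp only: of_int_eq_iff)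
  hence "b' dvd a' * b" by (metis dvd_triv_right)
  hence "b' dvd b" using cp by (metis coprime_commute coprime_dvd_mult_right_iff)
  hence "coprime b' p" using b(2) by (meson coprime_imp_coprime dvd_trans)
  thus "in_Zp p q" using qo by (simp add: in_Zp_def)
qed

locale zp =
  fixes p :: int
  assumes prime_p: "prime p"
begin

lemma p_nz: "p \<noteq> 0" using prime_p by auto

lemma zpI: "b \<noteq> 0 \<Longrightarrow> coprime b p \<Longrightarrow> q = of_int a / of_int b \<Longrightarrow> in_Zp p q"
  using in_Zp_iff[OF p_nz] by blast

lemma zpE: assumes "in_Zp p q" obtains a b where "b \<noteq> 0" "coprime b p" "q = of_int a / of_int b"
  using in_Zp_iff[OF p_nz] assms by blast

lemma zp_int [simp]: "in_Zp p (of_int a)"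
  by (rule zpI[of 1 _ a]) auto

lemma zp_nat [simp]: "in_Zp p (of_nat a)"
  using zp_int[of "int a"] by simp

lemma zp_numeral [simp]: "in_Zp p (numeral a)"
  using zp_int[of "numeral a"] by simp

lemma zp_0 [simp]: "in_Zp p 0" and zp_1 [simp]: "in_Zp p 1"
  using zp_int[of 0] zp_int[of 1] by simp_all

lemma zp_add [simp]: assumes "in_Zp p x" "in_Zp p y" shows "in_Zp p (x + y)"
proof -
  obtain a b where 1: "b \<noteq> 0" "coprime b p" "x = of_int a / of_int b" using zpE[OF assms(1)] .
  obtain c d where 2: "d \<noteq> 0" "coprime d p" "y = of_int c / of_int d" using zpE[OF assms(2)] .
  show ?thesis
    by (rule zpI[of "b*d" _ "a*d + c*b"]) (use 1 2 in \<open>auto simp: field_simps\<close>)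
qed

lemma zp_mult [simp]: assumes "in_Zp p x" "in_Zp p y" shows "in_Zp p (x * y)"
proof -
  obtain a b where 1: "b \<noteq> 0" "coprime b p" "x = of_int a / of_int b" using zpE[OF assms(1)] .
  obtain c d where 2: "d \<noteq> 0" "coprime d p" "y = of_int c / of_int d" using zpE[OF assms(2)] .
  show ?thesis
    by (rule zpI[of "b*d" _ "a*c"]) (use 1 2 in \<open>auto simp: field_simps\<close>)
qed

lemma zp_uminus [simp]: assumes "in_Zp p x" shows "in_Zp p (- x)"
proof -
  obtain a b where 1: "b \<noteq> 0" "coprime b p" "x = of_int a / of_int b" using zpE[OF assms(1)] .
  show ?thesis by (rule zpI[of "b" _ "-a"]) (use 1 in auto)
qed

lemma zp_diff [simp]: "in_Zp p x \<Longrightarrow> in_Zp p y \<Longrightarrow> in_Zp p (x - y)"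
  using zp_add[of x "-y"] zp_uminus[of y] by simp

lemma zp_inv: "coprime b p \<Longrightarrow> in_Zp p (1 / of_int b)"
  by (rule zpI[of b _ 1]) (use p_nz prime_p in \<open>auto\<close>)

lemma zp_div: "in_Zp p x \<Longrightarrow> coprime b p \<Longrightarrow> in_Zp p (x / of_int b)"
  using zp_mult[of x "1 / of_int b"] zp_inv[of b] by simp

lemma zp_power [simp]: "in_Zp p x \<Longrightarrow> in_Zp p (x ^ k)"
  by (induction k) auto

lemma zp_sum [simp]: "(\<And>i. i \<in> A \<Longrightarrow> in_Zp p (f i)) \<Longrightarrow> in_Zp p (sum f A)"
  by (induction A rule: infinite_finite_induct) auto

lemma cong_Zp_iff: "cong_Zp x y p \<longleftrightarrow> (\<exists>c. in_Zp p c \<and> x - y = of_int p * c)"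
proof
  assume "cong_Zp x y p"
  thus "\<exists>c. in_Zp p c \<and> x - y = of_int p * c" unfolding cong_Zp_def using p_nz
    by (intro exI[of _ "(x - y) / of_int p"]) auto
next
  assume "\<exists>c. in_Zp p c \<and> x - y = of_int p * c"
  then obtain c where "in_Zp p c" "x - y = of_int p * c" by blast
  moreover have "(x - y) / of_int p = c" unfolding \<open>x - y = of_int p * c\<close> using p_nz by simp
  ultimately show "cong_Zp x y p" unfolding cong_Zp_def by simp
qed

lemma congI: "in_Zp p c \<Longrightarrow> x - y = of_int p * c \<Longrightarrow> cong_Zp x y p"
  using cong_Zp_iff by blast

lemma congE: assumes "cong_Zp x y p" obtains c where "in_Zp p c" "x - y = of_int p * c"
  using assms cong_Zp_iff by blast

lemma zc_refl [simp]: "cong_Zp x x p"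
  by (rule congI[of 0]) auto

lemma zc_sym: "cong_Zp x y p \<Longrightarrow> cong_Zp y x p"
  apply (erule congE)
  subgoal for c by (rule congI[of "- c"]) (auto simp: algebra_simps)
  done

lemma zc_trans: "cong_Zp x y p \<Longrightarrow> cong_Zp y z p \<Longrightarrow> cong_Zp x z p"
  apply (erule congE, erule congE)
  subgoal for c d by (rule congI[of "c + d"]) (auto simp: algebra_simps)
  done

lemma zc_add: "cong_Zp x x' p \<Longrightarrow> cong_Zp y y' p \<Longrightarrow> cong_Zp (x + y) (x' + y') p"
  apply (erule congE, erule congE)
  subgoal for c d by (rule congI[of "c + d"]) (auto simp: algebra_simps)
  done

lemma zc_uminus: "cong_Zp x x' p \<Longrightarrow> cong_Zp (- x) (- x') p"
  apply (erule congE)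
  subgoal for c by (rule congI[of "- c"]) (auto simp: algebra_simps)
  done

lemma zc_diff: "cong_Zp x x' p \<Longrightarrow> cong_Zp y y' p \<Longrightarrow> cong_Zp (x - y) (x' - y') p"
  using zc_add[of x x' "-y" "-y'"] zc_uminus[of y y'] by simp

lemma zc_mult: "in_Zp p x \<Longrightarrow> in_Zp p y' \<Longrightarrow> cong_Zp x x' p \<Longrightarrow> cong_Zp y y' p \<Longrightarrow>
   cong_Zp (x * y) (x' * y') p"
proof -
  assume a: "in_Zp p x" "in_Zp p y'" "cong_Zp x x' p" "cong_Zp y y' p"
  obtain c where c: "in_Zp p c" "x - x' = of_int p * c" using a(3) by (rule congE)
  obtain d where d: "in_Zp p d" "y - y' = of_int p * d" using a(4) by (rule congE)
  have "x * y - x' * y' = x * (y - y') + y' * (x - x')" by (simp add: algebra_simps)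
  also have "\<dots> = of_int p * (x * d + y' * c)" unfolding c(2) d(2) by (simp add: algebra_simps)
  finally have "x * y - x' * y' = of_int p * (x * d + y' * c)" .
  moreover have "in_Zp p (x * d + y' * c)" using a c d by simp
  ultimately show ?thesis by (intro congI)
qed

lemma zc_zp: "cong_Zp x y p \<Longrightarrow> in_Zp p y \<Longrightarrow> in_Zp p x"
proof -
  assume a: "cong_Zp x y p" "in_Zp p y"
  obtain c where c: "in_Zp p c" "x - y = of_int p * c" using a(1) by (rule congE)
  have "x = y + of_int p * c" using c(2) by (simp add: algebra_simps)
  thus ?thesis using a(2) c(1) by simp
qed

lemma zc_mult2: "in_Zp p x \<Longrightarrow> in_Zp p y \<Longrightarrow> cong_Zp x x' p \<Longrightarrow> cong_Zp y y' p \<Longrightarrow>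
   cong_Zp (x * y) (x' * y') p"
  by (metis zc_mult zc_zp zc_sym)

lemma zc_power: "in_Zp p x \<Longrightarrow> cong_Zp x x' p \<Longrightarrow> cong_Zp (x ^ k) (x' ^ k) p"
  by (induction k) (simp_all add: zc_mult2)

lemma zc_sum: "(\<And>i. i \<in> A \<Longrightarrow> cong_Zp (f i) (g i) p) \<Longrightarrow> cong_Zp (sum f A) (sum g A) p"
  by (induction A rule: infinite_finite_induct) (auto intro!: zc_add)

lemma zc_int: "[a = b] (mod p) \<Longrightarrow> cong_Zp (of_int a) (of_int b) p"
proof -
  assume "[a = b] (mod p)"
  then obtain k where "a - b = p * k" by (metis cong_iff_dvd_diff dvd_def)
  thus ?thesis by (intro congI[of "of_int k"]) (auto simp flip: of_int_diff of_int_mult)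
qed

lemma zc_int_multiple: "in_Zp p c \<Longrightarrow> cong_Zp (x + of_int p * c) x p"
  by (rule congI[of c]) auto

end



context zp begin

lemma res_props:
  assumes "in_Zp p q"
  shows "0 \<le> res_Zp p q \<and> res_Zp p q < p \<and>
         [snd (quotient_of q) * res_Zp p q = fst (quotient_of q)] (mod p)"
proof -
  obtain a b where qo: "quotient_of q = (a, b)" by fastforce
  have cb: "coprime b p" using assms qo by (simp add: in_Zp_def)
  obtain x where x: "[b * x = 1] (mod p)" using cong_solve_coprime_int[OF cb] by blast
  have pp: "p > 0" using prime_p prime_gt_0_int by blast
  define P where "P = (\<lambda>r. 0 \<le> r \<and> r < p \<and> [b * r = a] (mod p))"
  have ex: "P ((a * x) mod p)"
  proof -
    have "[b * ((a * x) mod p) = b * (a * x)] (mod p)"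
      by (intro cong_scalar_left) (simp add: cong_def)
    also have "b * (a * x) = a * (b * x)" by (simp add: algebra_simps)
    also have "[a * (b * x) = a * 1] (mod p)" by (intro cong_scalar_left x)
    finally show ?thesis unfolding P_def using pp by simp
  qed
  have un: "r = r'" if "P r" "P r'" for r r'
  proof -
    have "[b * r = b * r'] (mod p)" using that unfolding P_def by (meson cong_sym cong_trans)
    hence "[r = r'] (mod p)" using cong_mult_lcancel[OF cb] by blast
    thus ?thesis using that unfolding P_def using cong_less_imp_eq_int by blast
  qed
  have "P (res_Zp p q)"
    unfolding res_Zp_def qo fst_conv snd_conv P_def[symmetric]
    by (rule theI[of P, OF ex]) (use un ex in blast)
  thus ?thesis unfolding P_def qo by simp
qed

lemma res_cong:
  assumes "in_Zp p q"
  shows "cong_Zp (of_int (res_Zp p q)) q p"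
proof -
  obtain a b where qo: "quotient_of q = (a, b)" by fastforce
  have cb: "coprime b p" using assms qo by (simp add: in_Zp_def)
  have bpos: "b > 0" using quotient_of_denom_pos[OF qo] .
  have q: "q = of_int a / of_int b" using quotient_of_div[OF qo] .
  define r where "r = res_Zp p q"
  have "[b * r = a] (mod p)" using res_props[OF assms] qo r_def by simp
  then obtain k where k: "b * r - a = p * k" by (metis cong_iff_dvd_diff dvd_def)
  have "of_int r - q = (of_int (b * r - a) :: rat) / of_int b"
    using bpos q by (simp add: field_simps)
  also have "\<dots> = of_int p * (of_int k / of_int b)" unfolding k by simp
  finally have "of_int r - q = of_int p * (of_int k / of_int b)" .
  moreover have "in_Zp p (of_int k / of_int b)" using bpos cb by (intro zpI[of b _ k]) auto
  ultimately show ?thesis unfolding r_def by (intro congI)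
qed

lemma Legendre_Zp_cong:
  assumes "in_Zp p q" "p > 2"
  shows "cong_Zp (of_int (Legendre_Zp q p)) (q ^ nat ((p - 1) div 2)) p"
proof -
  define p' where "p' = nat p"
  have pp': "p = int p'" using prime_p p'_def by (simp add: prime_ge_0_int)
  have pr': "prime p'" using prime_p pp' by simp
  have "[Legendre (res_Zp p q) (int p') = res_Zp p q ^ ((p' - 1) div 2)] (mod (int p'))"
    by (rule euler_criterion) (use pr' assms(2) pp' in auto)
  moreover have "(p' - 1) div 2 = nat ((p - 1) div 2)" using pp' by simp
  ultimately have "[Legendre (res_Zp p q) p = res_Zp p q ^ nat ((p - 1) div 2)] (mod p)"
    using pp' by simp
  hence "cong_Zp (of_int (Legendre_Zp q p)) (of_int (res_Zp p q) ^ nat ((p - 1) div 2)) p"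
    unfolding Legendre_Zp_def using zc_int by fastforce
  moreover have "cong_Zp (of_int (res_Zp p q) ^ nat ((p - 1) div 2)) (q ^ nat ((p - 1) div 2)) p"
    by (intro zc_power res_cong assms) simp
  ultimately show ?thesis by (rule zc_trans)
qed

end



lemma sum_reindex_mod:
  fixes p c d :: int and F :: "int \<Rightarrow> int"
  assumes pr: "prime p" and cp: "coprime c p"
    and F: "\<And>x y. [x = y] (mod p) \<Longrightarrow> [F x = F y] (mod p)"
  shows "[(\<Sum>x=0..p-1. F (c*x+d)) = (\<Sum>x=0..p-1. F x)] (mod p)"
proof -
  have pp: "p > 0" using pr prime_gt_0_int by blast
  define A where "A = {0..p-1}"
  define g where "g = (\<lambda>x. (c*x+d) mod p)"
  have sub: "g ` A \<subseteq> A" unfolding A_def g_def using pp by auto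
  have inj: "inj_on g A"
  proof
    fix x y assume xy: "x \<in> A" "y \<in> A" "g x = g y"
    hence "[c*x+d = c*y+d] (mod p)" unfolding g_def cong_def by simp
    hence "[c*x = c*y] (mod p)" by (simp add: cong_add_rcancel)
    hence "[x = y] (mod p)" using cong_mult_lcancel[OF cp] by blast
    thus "x = y" using xy(1,2) unfolding A_def by (auto intro: cong_less_imp_eq_int)
  qed
  have img: "g ` A = A" by (rule endo_inj_surj) (use sub inj A_def in auto)
  have "[(\<Sum>x\<in>A. F (c*x+d)) = (\<Sum>x\<in>A. F (g x))] (mod p)"
    by (intro cong_sum F) (simp add: g_def cong_def)
  also have "(\<Sum>x\<in>A. F (g x)) = (\<Sum>x\<in>g ` A. F x)"
    using sum.reindex[OF inj, of F] by simp
  also have "\<dots> = (\<Sum>x\<in>A. F x)" using img by simp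
  finally show ?thesis unfolding A_def .
qed

lemma pow_cong_fun: "[x = y] (mod p) \<Longrightarrow> [(x::int) ^ e = y ^ e] (mod p)"
  by (rule cong_pow)

lemma fermat_int:
  fixes p x :: int
  assumes pr: "prime p" and x: "0 < x" "x < p"
  shows "[x ^ nat (p - 1) = 1] (mod p)"
proof -
  define p' where "p' = nat p"
  define x' where "x' = nat x"
  have pp: "p = int p'" "x = int x'" using pr x p'_def x'_def by (auto simp: prime_ge_0_int)
  have "prime p'" using pr pp by simp
  moreover have "\<not> p' dvd x'" using x pp by (auto dest: dvd_imp_le)
  ultimately have "[x' ^ (p' - 1) = 1] (mod p')" by (rule fermat_theorem)
  hence "[int (x' ^ (p' - 1)) = int 1] (mod int p')" using cong_int_iff by blast
  moreover have "nat (p - 1) = p' - 1" using pp by simp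
  ultimately show ?thesis using pp by simp
qed

lemma power_sum_dvd:
  fixes p :: int and e :: nat
  assumes pr: "prime p" and e: "e \<ge> 1" "nat (p - 1) dvd e"
  shows "[(\<Sum>x=0..p-1. x ^ e) = -1] (mod p)"
proof -
  have pp: "p > 1" using pr prime_gt_1_int by blast
  obtain m where m: "e = nat (p - 1) * m" using e(2) by blast
  have "[(\<Sum>x=1..p-1. x ^ e) = (\<Sum>x=1..p-1. 1)] (mod p)"
  proof (intro cong_sum)
    fix x assume "x \<in> {1..p-1}"
    hence "[x ^ nat (p - 1) = 1] (mod p)" using fermat_int[OF pr] by auto
    hence "[(x ^ nat (p - 1)) ^ m = 1 ^ m] (mod p)" by (rule cong_pow)
    thus "[x ^ e = 1] (mod p)" by (simp add: m power_mult)
  qed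
  moreover have "(\<Sum>x=1..p-1. (1::int)) = p - 1" using pp by simp
  moreover have "(\<Sum>x=0..p-1. x ^ e) = (\<Sum>x=1..p-1. x ^ e)"
  proof -
    have "{0..p-1} = insert 0 {1..p-1}" using pp by auto
    thus ?thesis using e(1) by simp
  qed
  ultimately have "[(\<Sum>x=0..p-1. x ^ e) = p - 1] (mod p)" by simp
  moreover have "[p - 1 = -1] (mod p)" by (simp add: cong_iff_dvd_diff)
  ultimately show ?thesis by (rule cong_trans)
qed

lemma power_sum_ndvd:
  fixes p :: int and e :: nat
  assumes pr: "prime p" and e: "e \<ge> 1" "\<not> nat (p - 1) dvd e"
  shows "[(\<Sum>x=0..p-1. x ^ e) = 0] (mod p)"
proof -
  define p' where "p' = nat p"
  have pp: "p = int p'" using pr p'_def by (auto simp: prime_ge_0_int)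
  have pr': "prime p'" using pr pp by simp
  obtain g where g: "residue_primroot p' g" using prime_primitive_root_exists[of p'] pr' prime_gt_1_nat by blast
  have ordg: "ord p' g = p' - 1" and cg: "coprime p' g"
    using g pr' by (auto simp: residue_primroot_def totient_prime)
  have np: "nat (p - 1) = p' - 1" using pp by simp
  have "\<not> [g ^ e = 1] (mod p')" using e(2) ordg ord_divides unfolding np by simp
  hence ng: "\<not> [int g ^ e = 1] (mod p)"
    using cong_int_iff[of "g ^ e" 1 p'] pp by simp
  have cpg: "coprime (int g) p" using cg pp by (simp add: coprime_commute)
  define S where "S = (\<Sum>x=0..p-1. x ^ e)"
  have "[(\<Sum>x=0..p-1. (int g * x + 0) ^ e) = S] (mod p)"
    unfolding S_def by (rule sum_reindex_mod[OF pr cpg]) (rule cong_pow)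
  moreover have "(\<Sum>x=0..p-1. (int g * x + 0) ^ e) = int g ^ e * S"
    unfolding S_def by (simp add: power_mult_distrib sum_distrib_left)
  ultimately have "[int g ^ e * S = 1 * S] (mod p)" by simp
  hence "p dvd (int g ^ e - 1) * S" by (simp add: cong_iff_dvd_diff algebra_simps)
  moreover have "\<not> p dvd (int g ^ e - 1)" using ng by (simp add: cong_iff_dvd_diff)
  ultimately have "p dvd S" using pr prime_dvd_mult_iff by blast
  thus ?thesis unfolding S_def by (simp add: cong_0_iff)
qed




lemma charsum:
  fixes p r :: int and n :: nat
  assumes pr: "prime p" and p3: "p > 3" and n: "n = nat ((p - 1) div 2)"
  shows "[(\<Sum>x=0..p-1. ((x-r-3)*(x-r+3)*(x+2*r))^n) =
          - (\<Sum>i=0..n. int (n choose i)^2 * (-6)^(n-i) * (3*(r-1))^i)] (mod p)"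
proof -
  have odd: "odd p" using pr p3 prime_odd_int[of p] by simp
  have p2n: "p - 1 = 2 * int n" using odd p3 n by (auto elim!: oddE)
  have n1: "n \<ge> 1" using p2n p3 by linarith
  define A :: int where "A = -6"
  define B :: int where "B = 3*(r-1)"
  define F where "F = (\<lambda>x::int. ((x-r-3)*(x-r+3)*(x+2*r))^n)"
  define c where "c = (\<lambda>i j. int (n choose i) * int (n choose j) * A^(n-i) * B^(n-j))"
  have step1: "[(\<Sum>x=0..p-1. F (1*x + (r-3))) = (\<Sum>x=0..p-1. F x)] (mod p)"
    by (rule sum_reindex_mod[OF pr]) (auto simp: F_def intro!: cong_pow cong_mult cong_diff cong_add)
  have step3: "F (1*x + (r-3)) = (\<Sum>i\<le>n. \<Sum>j\<le>n. c i j * x ^ (n+i+j))" for x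
  proof -
    have e: "(1*x + (r-3) - r - 3) * (1*x + (r-3) - r + 3) * (1*x + (r-3) + 2*r) = x * (x+A) * (x+B)"
      unfolding A_def B_def by (simp add: algebra_simps)
    have "F (1*x + (r-3)) = x^n * (x + A)^n * (x + B)^n"
      unfolding F_def e by (simp add: power_mult_distrib)
    also have "(x + A)^n = (\<Sum>i\<le>n. int (n choose i) * x^i * A^(n-i))" by (rule binomial_ring)
    also have "(x + B)^n = (\<Sum>j\<le>n. int (n choose j) * x^j * B^(n-j))" by (rule binomial_ring)
    also have "x^n * (\<Sum>i\<le>n. int (n choose i) * x^i * A^(n-i)) * (\<Sum>j\<le>n. int (n choose j) * x^j * B^(n-j))
        = (\<Sum>i\<le>n. x^n * (int (n choose i) * x^i * A^(n-i))) * (\<Sum>j\<le>n. int (n choose j) * x^j * B^(n-j))"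
      by (simp add: sum_distrib_left)
    also have "\<dots> = (\<Sum>i\<le>n. \<Sum>j\<le>n. x^n * (int (n choose i) * x^i * A^(n-i)) * (int (n choose j) * x^j * B^(n-j)))"
      by (rule sum_product)
    also have "\<dots> = (\<Sum>i\<le>n. \<Sum>j\<le>n. c i j * x ^ (n+i+j))"
      unfolding c_def by (intro sum.cong refl) (simp add: power_add algebra_simps)
    finally show ?thesis .
  qed
  have step4: "(\<Sum>x=0..p-1. F (1*x + (r-3))) = (\<Sum>i\<le>n. \<Sum>j\<le>n. c i j * (\<Sum>x=0..p-1. x ^ (n+i+j)))"
    unfolding step3 by (simp add: sum_distrib_left sum.swap[of _ "{0..p-1}"])
  have ps: "[(\<Sum>x=0..p-1. x ^ (n+i+j)) = (if j = n - i then -1 else 0)] (mod p)"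
    if "i \<le> n" "j \<le> n" for i j
  proof (cases "j = n - i")
    case True
    hence "n + i + j = nat (p - 1)" using p2n that by simp
    thus ?thesis using True power_sum_dvd[OF pr, of "n+i+j"] n1 by simp
  next
    case False
    have "\<not> nat (p - 1) dvd (n+i+j)"
    proof
      assume "nat (p - 1) dvd (n+i+j)"
      then obtain k where k: "n+i+j = 2*n*k" using p2n by (auto simp: nat_mult_distrib)
      show False
      proof (cases k)
        case 0 thus False using k n1 by simp
      next
        case (Suc k')
        show False
        proof (cases k')
          case 0 thus False using k Suc False that by simp
        next
          case (Suc k'')
          hence "2*n*k \<ge> 4*n" using \<open>k = Suc k'\<close> by simp
          thus False using k that n1 by linarith
        qed
      qed
    qed
    thus ?thesis using False power_sum_ndvd[OF pr, of "n+i+j"] n1 by simp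
  qed
  have step5: "[(\<Sum>i\<le>n. \<Sum>j\<le>n. c i j * (\<Sum>x=0..p-1. x ^ (n+i+j))) =
                (\<Sum>i\<le>n. \<Sum>j\<le>n. c i j * (if j = n - i then -1 else 0))] (mod p)"
    by (intro cong_sum cong_scalar_left ps) auto
  have step6: "(\<Sum>i\<le>n. \<Sum>j\<le>n. c i j * (if j = n - i then -1 else 0)) = (\<Sum>i\<le>n. - c i (n - i))"
  proof (intro sum.cong refl)
    fix i assume "i \<in> {..n}"
    have "(\<Sum>j\<le>n. c i j * (if j = n - i then -1 else 0)) = (\<Sum>j\<le>n. if j = n - i then - c i j else 0)"
      by (intro sum.cong refl) simp
    also have "\<dots> = - c i (n - i)" by (subst sum.delta) auto
    finally show "(\<Sum>j\<le>n. c i j * (if j = n - i then -1 else 0)) = - c i (n - i)" .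
  qed
  have step7: "(\<Sum>i\<le>n. - c i (n - i)) = - (\<Sum>i=0..n. int (n choose i)^2 * (-6)^(n-i) * (3*(r-1))^i)"
  proof -
    have "(\<Sum>i\<le>n. - c i (n - i)) = - (\<Sum>i\<le>n. c i (n - i))" by (simp add: sum_negf)
    also have "(\<Sum>i\<le>n. c i (n - i)) = (\<Sum>i=0..n. int (n choose i)^2 * (-6)^(n-i) * (3*(r-1))^i)"
      unfolding atLeast0AtMost
    proof (intro sum.cong refl)
      fix i assume "i \<in> {..n}"
      hence "n choose (n - i) = n choose i" "n - (n - i) = i" by (simp_all add: binomial_symmetric[symmetric])
      thus "c i (n - i) = int (n choose i)^2 * (-6)^(n-i) * (3*(r-1))^i"
        unfolding c_def A_def B_def by (simp add: power2_eq_square)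
    qed
    finally show ?thesis .
  qed
  have "[(\<Sum>x=0..p-1. F x) = (\<Sum>x=0..p-1. F (1*x + (r-3)))] (mod p)" using step1 by (rule cong_sym)
  also have "(\<Sum>x=0..p-1. F (1*x + (r-3))) = (\<Sum>i\<le>n. \<Sum>j\<le>n. c i j * (\<Sum>x=0..p-1. x ^ (n+i+j)))"
    by (rule step4)
  also note step5
  also note step6
  also note step7
  finally show ?thesis unfolding F_def .
qed




lemma higher_pderiv_monom':
  "(pderiv ^^ m) (Polynomial.monom (c::rat) N) = (if m \<le> N then Polynomial.monom (c * fact N / fact (N - m)) (N - m) else 0)"
proof (induction m)
  case 0 thus ?case by simp
next
  case (Suc m)
  have "(pderiv ^^ Suc m) (monom c N) = pderiv ((pderiv ^^ m) (monom c N))" by simp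
  also note Suc.IH
  finally have eq: "(pderiv ^^ Suc m) (monom c N) =
     pderiv (if m \<le> N then Polynomial.monom (c * fact N / fact (N - m)) (N - m) else 0)" .
  show ?case
  proof (cases "Suc m \<le> N")
    case True
    hence "N - m = Suc (N - Suc m)" by simp
    define d where "d = (of_nat (N - m) :: rat)"
    have dnz: "d \<noteq> 0" using True unfolding d_def by simp
    have f: "fact (N - m) = d * fact (N - Suc m)" unfolding d_def using \<open>N - m = Suc (N - Suc m)\<close>
      by (metis fact_Suc)
    have "d * (c * fact N / fact (N - m)) = (c * fact N / fact (N - Suc m) :: rat)"
      unfolding f using dnz by (simp add: field_simps)
    hence "of_nat (N - m) * (c * fact N / fact (N - m)) = (c * fact N / fact (N - Suc m) :: rat)"
      unfolding d_def .
    thus ?thesis using eq True by (simp add: pderiv_monom)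
  next
    case False
    thus ?thesis using eq by (cases "m \<le> N") (auto simp: pderiv_monom)
  qed
qed

lemma higher_pderiv_pcompose_lin:
  "(pderiv ^^ m) (p \<circ>\<^sub>p [:a, c:]) = smult (c ^ m) (((pderiv ^^ m) p) \<circ>\<^sub>p [:a, c:])"
  for p :: "rat poly"
proof (induction m)
  case 0 thus ?case by simp
next
  case (Suc m)
  have "(pderiv ^^ Suc m) (p \<circ>\<^sub>p [:a, c:]) = pderiv ((pderiv ^^ m) (p \<circ>\<^sub>p [:a, c:]))" by simp
  also have "\<dots> = smult (c ^ m) (pderiv (((pderiv ^^ m) p) \<circ>\<^sub>p [:a, c:]))"
    unfolding Suc.IH by (simp add: pderiv_smult)
  also have "\<dots> = smult (c ^ Suc m) (((pderiv ^^ Suc m) p) \<circ>\<^sub>p [:a, c:])"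
    by (simp add: pderiv_pcompose pderiv_pCons mult.commute)
  finally show ?case .
qed

lemma LegendreP_hyper:
  "LegendreP n t = (\<Sum>j=0..n. of_nat (n choose j) * of_nat ((n+j) choose j) * ((t-1)/2)^j)"
proof -
  define P :: "rat poly" where "P = [:-1, 0, 1:] ^ n"
  define R where "R = (pderiv ^^ n) P"
  define ck :: "nat \<Rightarrow> rat" where "ck = (\<lambda>k. of_nat (n choose k) * (-1)^k)"
  have P_exp: "P = (\<Sum>k\<le>n. Polynomial.monom (ck k) (2*(n-k)))"
  proof -
    have "poly P x = poly (\<Sum>k\<le>n. Polynomial.monom (ck k) (2*(n-k))) x" for x
    proof -
      have "poly P x = (-1 + x^2)^n" unfolding P_def by (simp add: poly_power power2_eq_square)
      also have "\<dots> = (\<Sum>k\<le>n. of_nat (n choose k) * (-1)^k * (x^2)^(n-k))" by (rule binomial_ring)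
      also have "\<dots> = poly (\<Sum>k\<le>n. Polynomial.monom (ck k) (2*(n-k))) x"
        by (simp add: poly_sum poly_monom ck_def power_mult)
      finally show ?thesis .
    qed
    thus ?thesis using poly_eq_poly_eq_iff by blast
  qed
  have claim1: "poly R t = fact n * 2^n * LegendreP n t"
  proof -
    have "poly R t = (\<Sum>k\<le>n. poly ((pderiv ^^ n) (Polynomial.monom (ck k) (2*(n-k)))) t)"
      unfolding R_def P_exp higher_pderiv_sum poly_sum ..
    also have "\<dots> = (\<Sum>k\<le>n. if k \<le> n div 2 then
        ck k * fact (2*(n-k)) / fact (n - 2*k) * t ^ (n - 2*k) else 0)"
    proof (intro sum.cong refl)
      fix k assume "k \<in> {..n}"
      hence "(n \<le> 2*(n-k)) = (k \<le> n div 2)" "2*(n-k) - n = n - 2*k" by auto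
      thus "poly ((pderiv ^^ n) (Polynomial.monom (ck k) (2*(n-k)))) t = (if k \<le> n div 2 then
        ck k * fact (2*(n-k)) / fact (n - 2*k) * t ^ (n - 2*k) else 0)"
        by (simp add: higher_pderiv_monom' poly_monom)
    qed
    also have "\<dots> = (\<Sum>k\<in>{0..n div 2}. ck k * fact (2*(n-k)) / fact (n - 2*k) * t ^ (n - 2*k))"
      by (subst sum.inter_filter[symmetric]) (auto intro!: sum.cong)
    also have "\<dots> = fact n * 2^n * LegendreP n t"
      unfolding LegendreP_def sum_distrib_left
    proof (intro sum.cong refl)
      fix k assume k: "k \<in> {0..n div 2}"
      hence kn: "k \<le> n" by auto
      have "2*n - 2*k = 2*(n-k)" by simp
      thus "ck k * fact (2*(n-k)) / fact (n - 2*k) * t ^ (n - 2*k) =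
        fact n * 2^n * (1 / 2^n * ((-1)^k * fact (2*n - 2*k) / (fact k * fact (n - k) * fact (n - 2*k)) * t ^ (n - 2*k)))"
        unfolding ck_def binomial_fact[OF kn] by (simp add: field_simps)
    qed
    finally show ?thesis .
  qed
  define Q :: "rat poly" where "Q = (\<Sum>j\<le>n. Polynomial.monom (of_nat (n choose j)) (n+j))"
  have PL: "P \<circ>\<^sub>p [:1, 2:] = smult (4^n) Q"
  proof -
    have "poly (P \<circ>\<^sub>p [:1, 2:]) x = poly (smult (4^n) Q) x" for x
    proof -
      have "poly (P \<circ>\<^sub>p [:1, 2:]) x = ((1 + 2*x)^2 - 1)^n"
        unfolding P_def by (simp add: poly_pcompose poly_power power2_eq_square algebra_simps)
      also have "(1 + 2*x)^2 - 1 = 4 * (x * (x + 1))" by (simp add: power2_eq_square algebra_simps)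
      also have "(4 * (x * (x + 1)))^n = 4^n * (x^n * (x+1)^n)" by (simp add: power_mult_distrib)
      also have "(x+1)^n = (\<Sum>j\<le>n. of_nat (n choose j) * x^j * 1^(n-j))" by (rule binomial_ring)
      also have "4^n * (x^n * (\<Sum>j\<le>n. of_nat (n choose j) * x^j * 1^(n-j))) = poly (smult (4^n) Q) x"
        unfolding Q_def by (simp add: poly_sum poly_monom sum_distrib_left power_add algebra_simps)
      finally show ?thesis .
    qed
    thus ?thesis using poly_eq_poly_eq_iff by blast
  qed
  have claim2: "poly R (1 + 2*u) = fact n * 2^n * (\<Sum>j=0..n. of_nat (n choose j) * of_nat ((n+j) choose j) * u^j)" for u
  proof -
    have "smult (2^n) (R \<circ>\<^sub>p [:1, 2:]) = (pderiv ^^ n) (P \<circ>\<^sub>p [:1, 2:])"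
      unfolding R_def by (simp add: higher_pderiv_pcompose_lin)
    also have "\<dots> = smult (4^n) ((pderiv ^^ n) Q)" unfolding PL by (simp add: higher_pderiv_smult)
    finally have "poly (smult (2^n) (R \<circ>\<^sub>p [:1, 2:])) u = poly (smult (4^n) ((pderiv ^^ n) Q)) u" by simp
    hence "2^n * poly R (1 + 2*u) = 4^n * poly ((pderiv ^^ n) Q) u"
      by (simp add: poly_pcompose algebra_simps)
    moreover have "poly ((pderiv ^^ n) Q) u = (\<Sum>j\<le>n. of_nat (n choose j) * (fact (n+j) / fact j) * u^j)"
      unfolding Q_def higher_pderiv_sum poly_sum
      by (intro sum.cong refl) (simp add: higher_pderiv_monom' poly_monom)
    moreover have "(\<Sum>j\<le>n. of_nat (n choose j) * (fact (n+j) / fact j) * u^j) =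
          fact n * (\<Sum>j=0..n. of_nat (n choose j) * of_nat ((n+j) choose j) * u^j)"
      unfolding atLeast0AtMost sum_distrib_left
    proof (intro sum.cong refl)
      fix j assume "j \<in> {..n}"
      have "(of_nat ((n+j) choose j) :: rat) = fact (n+j) / (fact j * fact n)"
        using binomial_fact[of j "n+j"] by simp
      thus "of_nat (n choose j) * (fact (n+j) / fact j) * u^j =
            fact n * (of_nat (n choose j) * of_nat ((n+j) choose j) * u^j)"
        by (simp add: field_simps)
    qed
    ultimately have "2^n * poly R (1 + 2*u) = 4^n * (fact n * (\<Sum>j=0..n. of_nat (n choose j) * of_nat ((n+j) choose j) * u^j))"
      by simp
    moreover have "(4::rat)^n = 2^n * 2^n" by (simp flip: power_mult_distrib)
    ultimately show ?thesis by (simp add: algebra_simps)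
  qed
  have "fact n * 2^n * LegendreP n t = fact n * 2^n * (\<Sum>j=0..n. of_nat (n choose j) * of_nat ((n+j) choose j) * ((t-1)/2)^j)"
  proof -
    have h: "1 + 2 * ((t - 1) / 2) = t" by (simp add: field_simps)
    show ?thesis using claim1 claim2[of "(t-1)/2", unfolded h] by simp
  qed
  thus ?thesis by simp
qed




lemma rec_n: "k < n \<Longrightarrow> of_nat (n choose Suc k) = (of_nat n - of_nat k) * of_nat (n choose k) * (1 / (of_nat k + 1) :: rat)"
proof -
  assume kn: "k < n"
  have "Suc k * (n choose Suc k) = (n - k) * (n choose k)"
    using binomial_absorption[of k n] binomial_absorb_comp[of n k] by simp
  hence "(of_nat k + 1) * (of_nat (n choose Suc k) :: rat) = of_nat (n - k) * of_nat (n choose k)"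
    by (metis of_nat_Suc of_nat_mult add.commute)
  moreover have "(of_nat (n - k) :: rat) = of_nat n - of_nat k" using kn by simp
  ultimately show ?thesis by (simp add: field_simps)
qed

lemma rec_nk: "of_nat ((n + Suc k) choose Suc k) = (of_nat n + of_nat k + 1) * of_nat ((n+k) choose k) * (1 / (of_nat k + 1) :: rat)"
proof -
  have "Suc k * (Suc (n + k) choose Suc k) = Suc (n+k) * ((n+k) choose k)" by (rule Suc_times_binomial)
  hence "(of_nat k + 1) * (of_nat ((n + Suc k) choose Suc k) :: rat) = (of_nat n + of_nat k + 1) * of_nat ((n+k) choose k)"
    by (metis add_Suc_right of_nat_Suc of_nat_add of_nat_mult add.commute)
  thus ?thesis by (simp add: field_simps)
qed

lemma rec_c: "of_nat ((2 * Suc k) choose Suc k) = 2 * (2 * of_nat k + 1) * of_nat ((2*k) choose k) * (1 / (of_nat k + 1) :: rat)"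
proof -
  have a: "(of_nat ((2 * Suc k) choose Suc k) :: rat) = fact (2 * Suc k) / (fact (Suc k) * fact (Suc k))"
    using binomial_fact[of "Suc k" "2 * Suc k"] by simp
  have b: "(of_nat ((2 * k) choose k) :: rat) = fact (2 * k) / (fact k * fact k)"
    using binomial_fact[of k "2 * k"] by (simp add: mult_2)
  have c: "(fact (2 * Suc k) :: rat) = (2 * of_nat k + 2) * (2 * of_nat k + 1) * fact (2 * k)"
    by (simp add: fact_Suc algebra_simps)
  have d: "(fact (Suc k) :: rat) = (of_nat k + 1) * fact k" by (simp add: fact_Suc)
  have aux: "(2 * x + 2) * (2 * x + 1) * F / ((x + 1) * G * ((x + 1) * G)) =
      2 * (2 * x + 1) * (F / (G * G)) * (1 / (x + 1))" if "G \<noteq> 0" "x + 1 \<noteq> 0" for x F G :: rat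
  proof -
    have 1: "(2*x+2)*(2*x+1)*F = (x+1) * (2*(2*x+1)*F)" by (simp add: algebra_simps)
    have 2: "(x+1)*G*((x+1)*G) = (x+1) * ((x+1)*G*G)" by (simp add: algebra_simps)
    have "(2 * x + 2) * (2 * x + 1) * F / ((x + 1) * G * ((x + 1) * G)) = (2*(2*x+1)*F) / ((x+1)*G*G)"
      unfolding 1 2 by (rule mult_divide_mult_cancel_left[OF that(2)])
    also have "\<dots> = 2 * (2 * x + 1) * (F / (G * G)) * (1 / (x + 1))" by (simp add: ac_simps)
    finally show ?thesis .
  qed
  show ?thesis unfolding a b c d by (rule aux) (simp_all add: add_pos_pos)
qed

lemma coprime_small: "prime (p::int) \<Longrightarrow> 0 < m \<Longrightarrow> m < p \<Longrightarrow> coprime m p"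
  by (metis coprime_commute prime_imp_coprime zdvd_imp_le not_le)

context zp begin

lemma zc_eq: "x = y \<Longrightarrow> cong_Zp x y p" by simp

lemma inv_small: "0 < m \<Longrightarrow> m < p \<Longrightarrow> in_Zp p (1 / of_int m)"
  using zp_inv coprime_small prime_p by blast

lemma inv_small_nat: "k < nat p - 1 \<Longrightarrow> in_Zp p (1 / (of_nat k + 1))"
  using inv_small[of "int k + 1"] by simp

lemma zp_half: "p > 2 \<Longrightarrow> in_Zp p (1/2)"
  using inv_small[of 2] by simp

lemma zp_quarter: "p > 2 \<Longrightarrow> in_Zp p (1/4)"
  using zp_half zp_mult[of "1/2" "1/2"] by simp

context
  fixes n :: nat
  assumes p3: "p > 3" and n_def: "n = nat ((p - 1) div 2)"
begin

lemma p2n: "p = 2 * int n + 1"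
proof -
  have "odd p" using prime_p p3 prime_odd_int[of p] by simp
  thus ?thesis using n_def p3 by (auto elim!: oddE)
qed

lemma n_cong: "cong_Zp (of_nat n) (-1/2) p"
proof (rule congI[of "1/2"])
  show "in_Zp p (1/2)" using zp_half p3 by simp
  have "(of_nat n :: rat) = (of_int p - 1) / 2" using p2n by simp
  thus "of_nat n - (-1/2) = of_int p * (1/2 :: rat)" by (simp add: field_simps)
qed

lemma k_small: "k < n \<Longrightarrow> k < nat p - 1" using p2n by simp

lemma bc1: "k \<le> n \<Longrightarrow> cong_Zp (of_nat (n choose k)) (of_nat ((2*k) choose k) * (-1/4)^k) p"
proof (induction k)
  case 0 thus ?case by simp
next
  case (Suc k)
  hence kn: "k < n" by simp
  have IH: "cong_Zp (of_nat (n choose k)) (of_nat ((2*k) choose k) * (-1/4)^k) p" using Suc by simp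
  have i: "in_Zp p (1 / (of_nat k + 1))" using inv_small_nat k_small kn by blast
  have "cong_Zp ((of_nat n - of_nat k) * of_nat (n choose k) * (1 / (of_nat k + 1)))
                ((-1/2 - of_nat k) * (of_nat ((2*k) choose k) * (-1/4)^k) * (1 / (of_nat k + 1))) p"
    by (intro zc_mult2 zc_diff n_cong IH zc_refl i zp_mult zp_diff) auto
  moreover have "(-1/2 - of_nat k) * (of_nat ((2*k) choose k) * (-1/4)^k) * (1 / (of_nat k + 1)) =
     of_nat ((2*Suc k) choose Suc k) * (-1/4 :: rat)^Suc k"
    unfolding rec_c by (simp add: field_simps)
  ultimately show ?case using rec_n[OF kn] by simp
qed

lemma bc2: "k \<le> n \<Longrightarrow> cong_Zp (of_nat ((n+k) choose k)) (of_nat ((2*k) choose k) * (1/4)^k) p"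
proof (induction k)
  case 0 thus ?case by simp
next
  case (Suc k)
  hence kn: "k < n" by simp
  have IH: "cong_Zp (of_nat ((n+k) choose k)) (of_nat ((2*k) choose k) * (1/4)^k) p" using Suc by simp
  have i: "in_Zp p (1 / (of_nat k + 1))" using inv_small_nat k_small kn by blast
  have "cong_Zp ((of_nat n + of_nat k + 1) * of_nat ((n+k) choose k) * (1 / (of_nat k + 1)))
                ((-1/2 + of_nat k + 1) * (of_nat ((2*k) choose k) * (1/4)^k) * (1 / (of_nat k + 1))) p"
    by (intro zc_mult2 zc_add n_cong IH zc_refl i zp_mult zp_add) auto
  moreover have eq2: "(-1/2 + of_nat k + 1) * (of_nat ((2*k) choose k) * (1/4)^k) * (1 / (of_nat k + 1)) =
     of_nat ((2*Suc k) choose Suc k) * (1/4 :: rat)^Suc k"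
  proof -
    have e1: "(1/4::rat)^Suc k = (1/4)^k * (1/4)" by simp
    have aux: "(-1/2 + x + 1) * (C * q) * w = 2 * (2 * x + 1) * C * w * (q * (1/4))" for x C q w :: rat
      by (simp add: algebra_simps)
    show ?thesis unfolding rec_c e1 by (rule aux)
  qed
  ultimately show ?case unfolding rec_nk[of n k] eq2[symmetric] by simp
qed

lemma zp_half_mult: "in_Zp p x \<Longrightarrow> in_Zp p (x / 2)"
  using zp_mult[of x "1/2"] zp_half p3 by simp

lemma conj1:
  assumes t: "in_Zp p t"
  shows "cong_Zp (LegendreP n t) (\<Sum>k = 0..n. of_nat ((2*k) choose k) ^ 2 * ((1 - t) / 32) ^ k) p"
  unfolding LegendreP_hyper
proof (intro zc_sum)
  fix j assume "j \<in> {0..n}"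
  hence jn: "j \<le> n" by simp
  have u: "in_Zp p (((t - 1) / 2) ^ j)" using t by (simp add: zp_half_mult)
  have "cong_Zp (of_nat (n choose j) * of_nat ((n+j) choose j) * ((t-1)/2)^j)
     (of_nat ((2*j) choose j) * (-1/4)^j * (of_nat ((2*j) choose j) * (1/4)^j) * ((t-1)/2)^j) p"
    by (intro zc_mult2 bc1 bc2 jn zc_refl u) simp_all
  moreover have "of_nat ((2*j) choose j) * (-1/4)^j * (of_nat ((2*j) choose j) * (1/4)^j) * ((t-1)/2)^j
      = of_nat ((2*j) choose j) ^ 2 * ((1 - t) / 32) ^ j"
  proof -
    have h: "(-1/4) * (1/4) * ((t-1)/2) = (1-t)/(32::rat)" by (simp add: field_simps)
    have "(-1/4::rat)^j * (1/4)^j * ((t-1)/2)^j = ((-1/4) * (1/4) * ((t-1)/2))^j"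
      by (simp only: power_mult_distrib)
    hence "(-1/4::rat)^j * (1/4)^j * ((t-1)/2)^j = ((1-t)/32)^j" unfolding h .
    thus ?thesis by (simp add: power2_eq_square algebra_simps)
  qed
  ultimately show "cong_Zp (of_nat (n choose j) * of_nat ((n+j) choose j) * ((t-1)/2)^j)
      (of_nat ((2*j) choose j) ^ 2 * ((1 - t) / 32) ^ j) p" by simp
qed

lemma euler_int: "[Legendre a p = a ^ n] (mod p)"
proof -
  define p' where "p' = nat p"
  have pp': "p = int p'" using prime_p p'_def by (simp add: prime_ge_0_int)
  have pr': "prime p'" using prime_p pp' by simp
  have "[Legendre a (int p') = a ^ ((p' - 1) div 2)] (mod (int p'))"
    by (rule euler_criterion) (use pr' p3 pp' in auto)
  moreover have "(p' - 1) div 2 = n" using pp' n_def by simp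
  ultimately show ?thesis using pp' by simp
qed

lemma fermat6: "[(36::int) ^ n = 1] (mod p)"
proof -
  have nd: "\<not> p dvd 6"
  proof
    assume "p dvd 6"
    hence "p dvd 2 * 3" by simp
    hence "p dvd 2 \<or> p dvd 3" using prime_p prime_dvd_mult_iff by blast
    thus False using p3 zdvd_imp_le[of p 2] zdvd_imp_le[of p 3] by auto
  qed
  have pos: "0 < 6 mod p" using nd p3 by (simp add: dvd_eq_mod_eq_0 order_le_neq_trans)
  have "[(6 mod p) ^ nat (p - 1) = 1] (mod p)"
    by (rule fermat_int[OF prime_p pos]) (use p3 in simp)
  moreover have "[(6::int) ^ nat (p - 1) = (6 mod p) ^ nat (p - 1)] (mod p)"
    by (intro cong_pow) (simp add: cong_def)
  moreover have "(36::int) ^ n = 6 ^ nat (p - 1)"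
  proof -
    have "nat (p - 1) = 2 * n" using p2n by simp
    thus ?thesis by (simp add: power_mult)
  qed
  ultimately show ?thesis using cong_trans by metis
qed

lemma conj2C:
  assumes t: "in_Zp p t"
  shows "cong_Zp (- of_int (Legendre (-6) p * (\<Sum>x = 0..p - 1.
               Legendre_Zp (of_int x ^ 3 - 3 * (t^2 + 3) * of_int x + 2 * t * (t^2 - 9)) p)))
          (\<Sum>k = 0..n. of_nat ((2*k) choose k) ^ 2 * ((1 - t) / 32) ^ k) p"
proof -
  define r where "r = res_Zp p t"
  have hr: "cong_Zp t (of_int r) p" unfolding r_def using res_cong[OF t] by (rule zc_sym)
  define f where "f = (\<lambda>x::int. of_int x ^ 3 - 3 * (t^2 + 3) * of_int x + 2 * t * (t^2 - 9))"
  define G where "G = (\<Sum>i=0..n. int (n choose i)^2 * (-6)^(n-i) * (3*(r-1))^i)"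
  have fz: "in_Zp p (f x)" for x unfolding f_def using t by simp
  have s1: "cong_Zp (of_int (\<Sum>x = 0..p - 1. Legendre_Zp (f x) p)) (\<Sum>x = 0..p - 1. (f x)^n) p"
    unfolding of_int_sum
    by (intro zc_sum) (use Legendre_Zp_cong[OF fz] p3 n_def in auto)
  have s2: "cong_Zp ((f x)^n) (of_int (((x-r-3)*(x-r+3)*(x+2*r))^n)) p" for x
  proof -
    have "f x = (of_int x - t - 3) * (of_int x - t + 3) * (of_int x + 2 * t)"
      unfolding f_def by (simp add: power2_eq_square power3_eq_cube algebra_simps)
    moreover have "cong_Zp ((of_int x - t - 3) * (of_int x - t + 3) * (of_int x + 2 * t))
        ((of_int x - of_int r - 3) * (of_int x - of_int r + 3) * (of_int x + 2 * of_int r)) p"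
      by (intro zc_mult2 zc_diff zc_add hr zc_refl zc_mult2) (use t in simp_all)
    ultimately have "cong_Zp (f x) ((of_int x - of_int r - 3) * (of_int x - of_int r + 3) * (of_int x + 2 * of_int r)) p"
      by simp
    hence "cong_Zp ((f x)^n) (((of_int x - of_int r - 3) * (of_int x - of_int r + 3) * (of_int x + 2 * of_int r))^n) p"
      by (intro zc_power fz)
    thus ?thesis by simp
  qed
  have s3: "cong_Zp (\<Sum>x = 0..p - 1. (f x)^n) (of_int (- G)) p"
  proof -
    have "cong_Zp (\<Sum>x = 0..p - 1. (f x)^n) (\<Sum>x = 0..p - 1. of_int (((x-r-3)*(x-r+3)*(x+2*r))^n)) p"
      by (intro zc_sum s2)
    moreover have "cong_Zp (of_int (\<Sum>x = 0..p - 1. ((x-r-3)*(x-r+3)*(x+2*r))^n)) (of_int (- G)) p"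
      unfolding G_def by (intro zc_int charsum prime_p p3 n_def)
    ultimately show ?thesis unfolding of_int_sum by (rule zc_trans)
  qed
  have s4: "cong_Zp (of_int (Legendre (-6) p)) ((-6)^n) p"
    using zc_int[OF euler_int[of "-6"]] by simp
  have s5: "cong_Zp (- of_int (Legendre (-6) p * (\<Sum>x = 0..p - 1. Legendre_Zp (f x) p)))
      (- ((-6)^n * of_int (- G))) p"
    unfolding of_int_mult
    by (intro zc_uminus zc_mult2 s4 zc_trans[OF s1 s3]) simp_all
  have G6: "of_int G = (\<Sum>i=0..n. of_nat (n choose i)^2 * (-6)^(n-i) * (3*(of_int r - 1))^i :: rat)"
    unfolding G_def by simp
  have s6: "cong_Zp (- ((-6)^n * of_int (- G)))
      ((-6)^n * (\<Sum>i=0..n. of_nat (n choose i)^2 * (-6)^(n-i) * (3*(t - 1))^i)) p"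
  proof -
    have hh: "cong_Zp (\<Sum>i=0..n. of_nat (n choose i)^2 * (-6)^(n-i) * (3*(of_int r - 1))^i :: rat)
       (\<Sum>i=0..n. of_nat (n choose i)^2 * (-6)^(n-i) * (3*(t - 1))^i) p"
      by (intro zc_sum zc_mult2 zc_refl zc_power zc_diff zc_sym[OF hr]) (use t in simp_all)
    have eqG: "- ((-6)^n * of_int (- G)) = (-6)^n * (of_int G :: rat)" by simp
    show ?thesis unfolding eqG G6 by (rule zc_mult2[OF _ _ zc_refl hh]) simp_all
  qed
  have s7: "(-6)^n * (\<Sum>i=0..n. of_nat (n choose i)^2 * (-6)^(n-i) * (3*(t - 1))^i)
      = 36^n * (\<Sum>i=0..n. of_nat (n choose i)^2 * ((1 - t) / 2)^i)"
    unfolding sum_distrib_left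
  proof (intro sum.cong refl)
    fix i assume "i \<in> {0..n}"
    hence i: "n - i + i = n" by simp
    have "3 * (t - 1) = (-6) * ((1 - t) / 2)" by (simp add: field_simps)
    hence "(-6::rat)^(n-i) * (3*(t - 1))^i = (-6)^(n-i) * ((-6)^i * ((1 - t) / 2)^i)"
      by (simp only: power_mult_distrib)
    also have "\<dots> = (-6)^(n-i+i) * ((1 - t) / 2)^i" by (simp only: power_add mult.assoc)
    also have "\<dots> = (-6)^n * ((1 - t) / 2)^i" unfolding i ..
    finally have "(-6::rat)^(n-i) * (3*(t - 1))^i = (-6)^n * ((1 - t) / 2)^i" .
    note eqA = this
    have eqB: "(-6::rat)^n * (-6)^n = 36^n" by (simp flip: power_mult_distrib)
    have "(-6)^n * (of_nat (n choose i)^2 * (-6)^(n-i) * (3*(t - 1))^i) = of_nat (n choose i)^2 * ((-6)^n * ((-6)^(n-i) * (3*(t - 1))^i))"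
      by (simp only: mult_ac)
    also have "\<dots> = of_nat (n choose i)^2 * (((-6)^n * (-6)^n) * ((1 - t) / 2)^i)" unfolding eqA by (simp only: mult_ac)
    also have "\<dots> = 36^n * (of_nat (n choose i)^2 * ((1 - t) / 2)^i)" unfolding eqB by (simp only: mult_ac)
    finally show "(-6)^n * (of_nat (n choose i)^2 * (-6)^(n-i) * (3*(t - 1))^i) =
        36^n * (of_nat (n choose i)^2 * ((1 - t) / 2)^i)" .
  qed
  have s8: "cong_Zp (36^n * (\<Sum>i=0..n. of_nat (n choose i)^2 * ((1 - t) / 2)^i))
      (1 * (\<Sum>k = 0..n. of_nat ((2*k) choose k) ^ 2 * ((1 - t) / 32) ^ k)) p"
  proof (intro zc_mult2)
    show "cong_Zp (36 ^ n) 1 p" using zc_int[OF fermat6] by simp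
    show "cong_Zp (\<Sum>i=0..n. of_nat (n choose i)^2 * ((1 - t) / 2)^i)
        (\<Sum>k = 0..n. of_nat ((2*k) choose k) ^ 2 * ((1 - t) / 32) ^ k) p"
    proof (intro zc_sum)
      fix i assume "i \<in> {0..n}"
      hence "i \<le> n" by simp
      have u: "in_Zp p (((1 - t) / 2) ^ i)" using t by (simp add: zp_half_mult)
      have "cong_Zp (of_nat (n choose i)^2 * ((1 - t) / 2)^i)
          ((of_nat ((2*i) choose i) * (-1/4)^i)^2 * ((1 - t) / 2)^i) p"
        by (intro zc_mult2 zc_power bc1 \<open>i \<le> n\<close> zc_refl u) simp_all
      moreover have "(of_nat ((2*i) choose i) * (-1/4)^i)^2 * ((1 - t) / 2)^i =
          of_nat ((2*i) choose i) ^ 2 * ((1 - t) / 32) ^ i"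
      proof -
        have h: "(-1/4)^2 * ((1-t)/2) = (1-t)/(32::rat)" by (simp add: field_simps power2_eq_square)
        have e: "((-1/4::rat)^i)^2 = ((-1/4)^2)^i" by (metis power_mult mult.commute)
        have "((-1/4::rat)^i)^2 * ((1-t)/2)^i = ((-1/4)^2 * ((1-t)/2))^i"
          unfolding e by (simp only: power_mult_distrib)
        hence "((-1/4::rat)^i)^2 * ((1-t)/2)^i = ((1-t)/32)^i" unfolding h .
        thus ?thesis by (simp add: power_mult_distrib algebra_simps)
      qed
      ultimately show "cong_Zp (of_nat (n choose i)^2 * ((1 - t) / 2)^i)
          (of_nat ((2*i) choose i) ^ 2 * ((1 - t) / 32) ^ i) p" by simp
    qed
  qed (use t in \<open>simp_all add: zp_half_mult\<close>)
  have "cong_Zp (- of_int (Legendre (-6) p * (\<Sum>x = 0..p - 1. Legendre_Zp (f x) p)))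
      ((-6)^n * (\<Sum>i=0..n. of_nat (n choose i)^2 * (-6)^(n-i) * (3*(t - 1))^i)) p"
    by (rule zc_trans[OF s5 s6])
  hence "cong_Zp (- of_int (Legendre (-6) p * (\<Sum>x = 0..p - 1. Legendre_Zp (f x) p)))
      (1 * (\<Sum>k = 0..n. of_nat ((2*k) choose k) ^ 2 * ((1 - t) / 32) ^ k)) p"
    unfolding s7 by (rule zc_trans[OF _ s8])
  thus ?thesis unfolding f_def by simp
qed

end
end

theorem theorem2p11:
  fixes p :: int and t :: rat
  assumes "prime p" and "p > 3" and "in_Zp p t"
  shows "cong_Zp (LegendreP (nat ((p - 1) div 2)) t)
           (\<Sum>k = 0..nat ((p - 1) div 2). of_nat ((2*k) choose k) ^ 2 * ((1 - t) / 32) ^ k) p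
       \<and> cong_Zp (\<Sum>k = 0..nat ((p - 1) div 2). of_nat ((2*k) choose k) ^ 2 * ((1 - t) / 32) ^ k)
           (- of_int (Legendre (-6) p * (\<Sum>x = 0..p - 1.
               Legendre_Zp (of_int x ^ 3 - 3 * (t^2 + 3) * of_int x + 2 * t * (t^2 - 9)) p))) p"
proof -
  interpret zp p using assms(1) by unfold_locales
  have c1: "cong_Zp (LegendreP (nat ((p - 1) div 2)) t)
           (\<Sum>k = 0..nat ((p - 1) div 2). of_nat ((2*k) choose k) ^ 2 * ((1 - t) / 32) ^ k) p"
    by (rule conj1[OF assms(2) refl assms(3)])
  have c2: "cong_Zp (- of_int (Legendre (-6) p * (\<Sum>x = 0..p - 1.
               Legendre_Zp (of_int x ^ 3 - 3 * (t^2 + 3) * of_int x + 2 * t * (t^2 - 9)) p)))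
          (\<Sum>k = 0..nat ((p - 1) div 2). of_nat ((2*k) choose k) ^ 2 * ((1 - t) / 32) ^ k) p"
    by (rule conj2C[OF assms(2) refl assms(3)])
  show ?thesis using c1 zc_sym[OF c2] by blast
qed

end
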